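(* Let $V\subset\mathbb{R}^d$ be a finite antichain, $p\in S_V$, $v\in D_p$ with $v_i=p_i$, and assume $v$ is not an $i$-witness for $p$. Then either $p$ is not a characteristic point or $V$ is degenerate.
   Context: For $x,y\in\mathbb{R}^d$, $x\le y$ (dominance order) means $x_i\le y_i$ for all $i$; $y\rhd x$ means $y_i>x_i$ for all $i$; $y\rhd_i x$ means $y_i=x_i$ and $y_j>x_j$ for all $j\neq i$. $V\subset\mathbb{R}^d$ is a finite antichain in the dominance order (elements are called minima). The orthogonal surface $S_V$ is the topological boundary of $\langle V\rangle=\{x: x\ge v\text{ for some }v\in V\}$; equivalently $p\in S_V$ iff there is $v\in V$ with $v\le p$ and no $w\in V$ with $p\rhd w$. For $p\in S_V$, $D_p=\{v\in V:v\le p\}$ and for $v\in D_p$, $T_p(v)=\{i: p_i=v_i\}$. For $p\in S_V$, a minimum $v\in D_p$ is an $i$-witness for $p$ if there is $q\in S_V$ with $v\le p\le q$ and $q\rhd_i v$. Flats: $U_i(v)=\{p\in S_V: p\rhd_i v\}$; for $v,w\in V$ put $v\sim_i w$ iff $U_i(v)\cap U_i(w)\neq\emptyset$, and let $\sim_i^c$ be the reflexive–transitive closure; the $i$-flat of $v$ is $F_i(v)=\overline{\bigcup_{w\sim_i^c v}U_i(w)}$ (topological closure), and an $i$-flat is any set of this form. A characteristic point is a point of $S_V$ that lies in some $i$-flat for every $i\in\{1,\dots,d\}$. $V$ is degenerate if there exist a characteristic point $p$, minima $x,u,v\in D_p$ and coordinates $i\neq j$ with $u_i<v_i=x_i=p_i$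 and $v_j<u_j=x_j=p_j$; otherwise $V$ is non-degenerate. *)

theory Defs
  imports "HOL-Analysis.Analysis"
begin

definition dom_le :: "real ^ 'd \<Rightarrow> real ^ 'd \<Rightarrow> bool" where
  "dom_le x y \<longleftrightarrow> (\<forall>i. x $ i \<le> y $ i)"

definition dom_gt :: "real ^ 'd \<Rightarrow> real ^ 'd \<Rightarrow> bool" where
  "dom_gt y x \<longleftrightarrow> (\<forall>i. y $ i > x $ i)"

definition dom_gt_i :: "'d \<Rightarrow> real ^ 'd \<Rightarrow> real ^ 'd \<Rightarrow> bool" where
  "dom_gt_i i y x \<longleftrightarrow> y $ i = x $ i \<and> (\<forall>j. j \<noteq> i \<longrightarrow> y $ j > x $ j)"

definition finite_antichain :: "(real ^ 'd) set \<Rightarrow> bool" where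
  "finite_antichain V \<longleftrightarrow> finite V \<and> (\<forall>v\<in>V. \<forall>w\<in>V. dom_le v w \<longrightarrow> v = w)"

definition orth_surface :: "(real ^ 'd) set \<Rightarrow> (real ^ 'd) set" where
  "orth_surface V = {p. (\<exists>v\<in>V. dom_le v p) \<and> \<not> (\<exists>w\<in>V. dom_gt p w)}"

definition Dp :: "(real ^ 'd) set \<Rightarrow> real ^ 'd \<Rightarrow> (real ^ 'd) set" where
  "Dp V p = {v\<in>V. dom_le v p}"

definition is_witness :: "(real ^ 'd) set \<Rightarrow> 'd \<Rightarrow> real ^ 'd \<Rightarrow> real ^ 'd \<Rightarrow> bool" where
  "is_witness V i v p \<longleftrightarrow> v \<in> Dp V p \<and>
     (\<exists>q\<in>orth_surface V. dom_le v p \<and> dom_le p q \<and> dom_gt_i i q v)"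

definition Uflat :: "(real ^ 'd) set \<Rightarrow> 'd \<Rightarrow> real ^ 'd \<Rightarrow> (real ^ 'd) set" where
  "Uflat V i v = {p\<in>orth_surface V. dom_gt_i i p v}"

definition sim_i :: "(real ^ 'd) set \<Rightarrow> 'd \<Rightarrow> real ^ 'd \<Rightarrow> real ^ 'd \<Rightarrow> bool" where
  "sim_i V i v w \<longleftrightarrow> v \<in> V \<and> w \<in> V \<and> Uflat V i v \<inter> Uflat V i w \<noteq> {}"

definition simc_i :: "(real ^ 'd) set \<Rightarrow> 'd \<Rightarrow> real ^ 'd \<Rightarrow> real ^ 'd \<Rightarrow> bool" where
  "simc_i V i v w \<longleftrightarrow> v \<in> V \<and> w \<in> V \<and> (sim_i V i)\<^sup>*\<^sup>* v w"

definition iflat :: "(real ^ 'd) set \<Rightarrow> 'd \<Rightarrow> real ^ 'd \<Rightarrow> (real ^ 'd) set" where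
  "iflat V i v = closure (\<Union>{Uflat V i w | w. simc_i V i w v})"

definition characteristic_point :: "(real ^ 'd) set \<Rightarrow> real ^ 'd \<Rightarrow> bool" where
  "characteristic_point V p \<longleftrightarrow> p \<in> orth_surface V \<and>
     (\<forall>i. \<exists>v\<in>V. p \<in> iflat V i v)"

definition degenerate :: "(real ^ 'd) set \<Rightarrow> bool" where
  "degenerate V \<longleftrightarrow> (\<exists>p x u v i j. characteristic_point V p \<and>
     x \<in> Dp V p \<and> u \<in> Dp V p \<and> v \<in> Dp V p \<and> i \<noteq> j \<and>
     u $ i < v $ i \<and> v $ i = x $ i \<and> x $ i = p $ i \<and>
     v $ j < u $ j \<and> u $ j = x $ j \<and> x $ j = p $ j)"

end

theory Submission
  imports Defs
begin

lemma pos_lb: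
  fixes A :: "real set"
  assumes "finite A"
  shows "\<exists>\<delta>>0. \<forall>a\<in>A. a > 0 \<longrightarrow> \<delta> \<le> a"
proof -
  let ?B = "{a\<in>A. a > 0} \<union> {1}"
  have f: "finite ?B" using assms by auto
  have "\<forall>b\<in>?B. b > 0" by auto
  then have "Min ?B > 0" using f by (subst Min_gr_iff) auto
  moreover have "\<forall>a\<in>A. a > 0 \<longrightarrow> Min ?B \<le> a" using f by auto
  ultimately show ?thesis by blast
qed

lemma comp_close:
  fixes x y :: "real ^ 'd"
  shows "\<bar>x $ k - y $ k\<bar> \<le> dist x y"
  by (metis component_le_norm_cart dist_norm vector_minus_component)

theorem lemma4p7:
  fixes V :: "(real ^ 'd) set" and p v :: "real ^ 'd" and i :: 'd
  assumes "finite_antichain V"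
    and "p \<in> orth_surface V"
    and "v \<in> Dp V p"
    and "v $ i = p $ i"
    and "\<not> is_witness V i v p"
  shows "\<not> characteristic_point V p \<or> degenerate V"
proof (cases "characteristic_point V p")
  case False then show ?thesis by simp
next
  case True
  then have cp: "characteristic_point V p" by simp
  have finV: "finite V" using assms(1) unfolding finite_antichain_def by simp
  have vV: "v \<in> V" and vp: "dom_le v p" using assms(3) unfolding Dp_def by auto
  have pS1: "\<exists>v\<in>V. dom_le v p" and pS2: "\<not> (\<exists>w\<in>V. dom_gt p w)"
    using assms(2) unfolding orth_surface_def by auto
  have "finite ((\<lambda>(w,k). w$k - p$k) ` (V \<times> (UNIV::'d set)))" using finV by simp
  from pos_lb[OF this] obtain \<epsilon> :: real where ep: "\<epsilon> > 0"
    and epb: "\<And>w k. w \<in> V \<Longrightarrow> w$k - p$k > 0 \<Longrightarrow> \<epsilon> \<le> w$k - p$k" by fastforce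
  define q :: "real ^ 'd" where "q = (\<chi> k. if k = i then p$k else if p$k = v$k then p$k + \<epsilon> else p$k)"
  have pq: "dom_le p q" unfolding q_def dom_le_def using ep by auto
  have vq: "dom_le v q" using vp pq unfolding dom_le_def by (meson order_trans)
  have gi: "dom_gt_i i q v" unfolding q_def dom_gt_i_def using vp ep assms(4)
    unfolding dom_le_def by (auto simp: order.strict_iff_order)
  have "q \<notin> orth_surface V"
  proof
    assume "q \<in> orth_surface V"
    then have "is_witness V i v p" unfolding is_witness_def using assms(3) vp pq gi by blast
    then show False using assms(5) by simp
  qed
  then obtain w where wV: "w \<in> V" and qw: "dom_gt q w"
    unfolding orth_surface_def using vV vq by auto
  have qi: "q$i = p$i" unfolding q_def by simp
  have wi: "w$i < p$i" using qw qi unfolding dom_gt_def by metis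
  have wp: "w$k \<le> p$k" for k
  proof (rule ccontr)
    assume "\<not> w$k \<le> p$k"
    then have "\<epsilon> \<le> w$k - p$k" using epb[OF wV] by simp
    moreover have "q$k > w$k" using qw unfolding dom_gt_def by simp
    moreover have "q$k \<le> p$k + \<epsilon>" unfolding q_def using ep by auto
    ultimately show False by simp
  qed
  have wT: "w$k = p$k \<Longrightarrow> v$k = p$k" for k
  proof (rule ccontr)
    assume "w$k = p$k" "v$k \<noteq> p$k"
    moreover have "q$k > w$k" using qw unfolding dom_gt_def by simp
    ultimately show False unfolding q_def using assms(4) by (auto split: if_splits)
  qed
  have "finite ((\<lambda>k. p$k - w$k) ` (UNIV::'d set))" by simp
  from pos_lb[OF this] obtain \<delta> :: real where dp: "\<delta> > 0"
    and dpb: "\<And>k. p$k - w$k > 0 \<Longrightarrow> \<delta> \<le> p$k - w$k" by fastforce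
  obtain v0 where "v0 \<in> V" and pin: "p \<in> iflat V i v0" using cp unfolding characteristic_point_def by blast
  have fin2: "finite {Uflat V i w | w. simc_i V i w v0}"
  proof -
    have "{Uflat V i w | w. simc_i V i w v0} \<subseteq> Uflat V i ` V" unfolding simc_i_def by auto
    then show ?thesis using finV finite_subset by blast
  qed
  have "p \<in> \<Union>(closure ` {Uflat V i w | w. simc_i V i w v0})"
  proof -
    let ?F = "{Uflat V i w | w. simc_i V i w v0}"
    have "closure (\<Union>?F) \<subseteq> \<Union>(closure ` ?F)"
      by (rule closure_minimal) (auto intro: closed_Union fin2 closure_subset[THEN subsetD])
    then show ?thesis using pin unfolding iflat_def by blast
  qed
  then obtain w' where w'V: "w' \<in> V" and pcl: "p \<in> closure (Uflat V i w')"
    unfolding simc_i_def by auto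
  have appr: "\<exists>y\<in>Uflat V i w'. dist y p < e" if "e > 0" for e
    using pcl that unfolding closure_approachable by blast
  have w'i: "w'$i = p$i"
  proof (rule ccontr)
    assume "w'$i \<noteq> p$i"
    then have "\<bar>w'$i - p$i\<bar> > 0" by simp
    from appr[OF this] obtain y where "y \<in> Uflat V i w'" "dist y p < \<bar>w'$i - p$i\<bar>" by blast
    moreover have "\<bar>y$i - p$i\<bar> \<le> dist y p" by (rule comp_close)
    moreover have "y$i = w'$i" using \<open>y \<in> Uflat V i w'\<close> unfolding Uflat_def dom_gt_i_def by simp
    ultimately show False by simp
  qed
  have w'p: "w'$k \<le> p$k" for k
  proof (cases "k = i")
    case True then show ?thesis using w'i by simp
  next
    case False
    show ?thesis
    proof (rule ccontr)
      assume "\<not> w'$k \<le> p$k"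
      then have "w'$k - p$k > 0" by simp
      from appr[OF this] obtain y where "y \<in> Uflat V i w'" "dist y p < w'$k - p$k" by blast
      moreover have "\<bar>y$k - p$k\<bar> \<le> dist y p" by (rule comp_close)
      moreover have "y$k > w'$k" using \<open>y \<in> Uflat V i w'\<close> False unfolding Uflat_def dom_gt_i_def by simp
      ultimately show False by simp
    qed
  qed
  from appr[OF dp] obtain y where yU: "y \<in> Uflat V i w'" and yd: "dist y p < \<delta>" by blast
  have yS: "y \<in> orth_surface V" and yg: "dom_gt_i i y w'" using yU unfolding Uflat_def by auto
  have "\<not> dom_gt y w" using yS wV unfolding orth_surface_def by auto
  then obtain k where yk: "y$k \<le> w$k" unfolding dom_gt_def by (auto simp: not_less)
  have ki: "k \<noteq> i" using yk yg w'i wi unfolding dom_gt_i_def by auto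
  have wk: "w$k = p$k"
  proof (rule ccontr)
    assume "w$k \<noteq> p$k"
    then have "p$k - w$k > 0" using wp[of k] by simp
    then have "\<delta> \<le> p$k - w$k" by (rule dpb)
    moreover have "\<bar>y$k - p$k\<bar> \<le> dist y p" by (rule comp_close)
    ultimately show False using yk yd by simp
  qed
  have w'k: "w'$k < w$k" using yk yg ki unfolding dom_gt_i_def by force
  have D1: "w \<in> Dp V p" using wV wp unfolding Dp_def dom_le_def by simp
  have D2: "w' \<in> Dp V p" using w'V w'p unfolding Dp_def dom_le_def by simp
  have vk: "v$k = p$k" using wT[OF wk] .
  have "characteristic_point V p \<and> v \<in> Dp V p \<and> w \<in> Dp V p \<and> w' \<in> Dp V p \<and> i \<noteq> k \<and>
     w $ i < w' $ i \<and> w' $ i = v $ i \<and> v $ i = p $ i \<and>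
     w' $ k < w $ k \<and> w $ k = v $ k \<and> v $ k = p $ k"
    using cp assms(3,4) D1 D2 wi w'i ki w'k wk vk by simp
  then have "degenerate V" unfolding degenerate_def by blast
  then show ?thesis by simp
qed

end
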